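(* Let $\gamma>1$ and $\varphi_e(z)=-\frac{1}{\gamma-1}\log z$ for $z>0$. In the discrete setting described in the context, let $(\rho_K^n)$, $(e_K^n)$ ($K\in\mathcal M$, $0\le n\le N$) be positive, let $\rho_\sigma^{n+1}$, $e_\sigma^{n+1}$ be face values on interior faces, $u_{K,\sigma}^{n+1}$ normal face velocities, and $F_{K,\sigma}^{n+1}=|\sigma|\,\rho_\sigma^{n+1}u_{K,\sigma}^{n+1}$. For $\sigma=K|L\in\mathcal{E}_{\rm int}$ and $0\le n\le N-1$ let $e_{KL}^{n+1}$ be the number $x_{KL}$ associated with $\varphi=\varphi_e$, $x_K=e_K^{n+1}$, $x_L=e_L^{n+1}$, and define \[ (\delta\varphi_e)_\sigma^{n+1}=\varphi_e(e_K^{n+1})-\varphi_e(e_\sigma^{n+1})+\varphi_e'(e_K^{n+1})\bigl[e_{KL}^{n+1}-e_K^{n+1}\bigr]+\tfrac12\bigl[\varphi_e'(e_K^{n+1})+\varphi_e'(e_L^{n+1})\bigr]\bigl[e_\sigma^{n+1}-e_{KL}^{n+1}\bigr], \] \[ |K|\,(\delta R_e)_K^{n+1}=\sum_{\sigma\in\mathcal{E}(K)\cap\mathcal{E}_{\rm int}}(\delta\varphi_e)_\sigma^{n+1}F_{K,\sigma}^{n+1}. \] Assume that for every $\sigma=K|L\in\mathcal{E}_{\rm int}$ and $0\le n\le N-1$: $e_\sigma^{n+1}\in|\hspace{-0.12em}[e_K^{n+1},e_{KL}^{n+1}]\hspace{-0.12em}|$ if $u_{K,\sigma}^{n+1}\ge0$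 and $e_\sigma^{n+1}\in|\hspace{-0.12em}[e_L^{n+1},e_{KL}^{n+1}]\hspace{-0.12em}|$ otherwise. Let $M>1$ and suppose $\rho_K^n\le M$, $e_K^n\le M$, $1/e_K^n\le M$, $|u_{K,\sigma}^n|\le M$ for all $K\in\mathcal M$, $\sigma\in\mathcal{E}(K)$, $0\le n\le N$. Let $|\varphi_e'|_\infty=\max(|\varphi_e'(1/M)|,|\varphi_e'(M)|)$. Then \[ \|\delta R_e\|_{-1,1}\le 3\,M^2\,|\varphi_e'|_\infty\,\|e\|_{x,BV}\,h_{\mathcal M}. \]
   Context: Setting: $\Omega\subset\mathbb{R}^d$ bounded; $\mathcal{M}$ a regular polytopal mesh of $\Omega$ with faces $\mathcal{E}$, faces of $K$ denoted $\mathcal{E}(K)$, interior faces $\mathcal{E}_{\rm int}$; $\sigma=K|L$ denotes the interior face between $K$ and $L$; $|K|$, $|\sigma|$ are the measures; ${\boldsymbol x}_K$ is the mass center of $K$; $h_{\mathcal M}=\max_{K}{\rm diam}(K)$. Uniform time grid $t_n=n\,\delta t$, $0\le n\le N$, $t_N=T$. Normal velocities satisfy $u_{L,\sigma}^n=-u_{K,\sigma}^n$ for $\sigma=K|L$ and vanish on boundary faces; face values depend only on the face. Notation $|\hspace{-0.12em}[a,b]\hspace{-0.12em}|=[\min(a,b),\max(a,b)]$. The number $x_{KL}$: for a strictly convex continuously differentiable $\varphi$ on an interval $I$ and $x_K,x_L\in I$, $x_{KL}$ is the unique real number in $|\hspace{-0.12em}[x_K,x_L]\hspace{-0.12em}|$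 with $\varphi(x_K)+\varphi'(x_K)(x_{KL}-x_K)=\varphi(x_L)+\varphi'(x_L)(x_{KL}-x_L)$ if $x_K\ne x_L$, and $x_{KL}=x_K=x_L$ otherwise. Norms: $\|z\|_{x,BV}=\sum_{n}\delta t\sum_{\sigma=K|L\in\mathcal{E}_{\rm int}}|\sigma|\,|z_L^n-z_K^n|$, and \[ \|z\|_{-1,1}=\sup_{\psi}\frac{1}{\sup_{{\boldsymbol x}\in\Omega,t\in(0,T)}|\nabla\psi({\boldsymbol x},t)|}\Bigl[\sum_{n}\delta t\sum_{K\in\mathcal M}|K|\,z_K^n\,\psi({\boldsymbol x}_K,t_n)\Bigr], \] supremum over $\psi\in C^\infty_c([0,T)\times\bar\Omega)$ with nonzero gradient, sums over $n$ over the time indices where $z$ is defined. *)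

theory Defs
  imports "HOL-Analysis.Analysis"
begin

fun dderiv :: "'a::euclidean_space list \<Rightarrow> ('a \<Rightarrow> real) \<Rightarrow> 'a \<Rightarrow> real" where
  "dderiv [] f = f"
| "dderiv (v # vs) f = (\<lambda>x. frechet_derivative (dderiv vs f) (at x) v)"

definition smooth_fun :: "('a::euclidean_space \<Rightarrow> real) \<Rightarrow> bool" where
  "smooth_fun f \<longleftrightarrow> (\<forall>vs. dderiv vs f differentiable_on UNIV)"

definition cell_faces :: "'a::euclidean_space set \<Rightarrow> 'a set set" where
  "cell_faces K = {\<sigma>. \<sigma> facet_of K}"

definition int_face :: "'a::euclidean_space set set \<Rightarrow> 'a set \<Rightarrow> 'a set \<Rightarrow> 'a set \<Rightarrow> bool" where
  "int_face Mesh K L \<sigma> \<longleftrightarrow> K \<in> Mesh \<and> L \<in> Mesh \<and> K \<noteq> L \<and> \<sigma> = K \<inter> L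
       \<and> \<sigma> facet_of K \<and> \<sigma> facet_of L"

definition int_faces :: "'a::euclidean_space set set \<Rightarrow> 'a set set" where
  "int_faces Mesh = {\<sigma>. \<exists>K L. int_face Mesh K L \<sigma>}"

definition polytopal_mesh :: "'a::euclidean_space set \<Rightarrow> 'a set set \<Rightarrow> bool" where
  "polytopal_mesh \<Omega> Mesh \<longleftrightarrow>
     open \<Omega> \<and> bounded \<Omega> \<and> finite Mesh \<and>
     (\<forall>K\<in>Mesh. polytope K \<and> interior K \<noteq> {}) \<and>
     (\<forall>K\<in>Mesh. \<forall>L\<in>Mesh. K \<noteq> L \<longrightarrow> interior K \<inter> interior L = {}) \<and>
     \<Union>Mesh = closure \<Omega> \<and>
     (\<forall>\<sigma>\<in>int_faces Mesh. card {K\<in>Mesh. \<sigma> facet_of K} = 2) \<and>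
     (\<forall>K\<in>Mesh. \<forall>\<sigma>\<in>cell_faces K. \<sigma> \<in> int_faces Mesh \<or> \<sigma> \<subseteq> frontier \<Omega>)"

definition nbr :: "'a::euclidean_space set set \<Rightarrow> 'a set \<Rightarrow> 'a set \<Rightarrow> 'a set" where
  "nbr Mesh K \<sigma> = (THE L. L \<in> Mesh \<and> L \<noteq> K \<and> \<sigma> facet_of L)"

text \<open>Some cell having \<sigma> as a face (used to write sums over \<sigma> = K|L).\<close>
definition cell1 :: "'a::euclidean_space set set \<Rightarrow> 'a set \<Rightarrow> 'a set" where
  "cell1 Mesh \<sigma> = (SOME K. K \<in> Mesh \<and> \<sigma> facet_of K)"

definition vol :: "'a::euclidean_space set \<Rightarrow> real" where
  "vol K = measure lebesgue K"

definition center :: "'a::euclidean_space set \<Rightarrow> 'a" where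
  "center K = (1 / vol K) *\<^sub>R integral K (\<lambda>x. x)"

definition mesh_size :: "'a::euclidean_space set set \<Rightarrow> real" where
  "mesh_size Mesh = Max (diameter ` Mesh)"

definition xKL :: "(real \<Rightarrow> real) \<Rightarrow> real \<Rightarrow> real \<Rightarrow> real" where
  "xKL \<phi> xK xL =
     (if xK = xL then xK
      else THE x. min xK xL \<le> x \<and> x \<le> max xK xL \<and>
             \<phi> xK + deriv \<phi> xK * (x - xK) = \<phi> xL + deriv \<phi> xL * (x - xL))"

definition between :: "real \<Rightarrow> real \<Rightarrow> real set" where
  "between a b = {min a b .. max a b}"

definition phi_e :: "real \<Rightarrow> real \<Rightarrow> real" where
  "phi_e \<gamma> z = - (1 / (\<gamma> - 1)) * ln z"

text \<open>(\<delta>\<phi>_e)_\<sigma>^{n+1} for \<sigma> = K|L, written at time index m = n+1.\<close>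
definition dphi :: "real \<Rightarrow> ('a set \<Rightarrow> nat \<Rightarrow> real) \<Rightarrow> ('a set \<Rightarrow> nat \<Rightarrow> real)
                     \<Rightarrow> 'a set \<Rightarrow> 'a set \<Rightarrow> 'a set \<Rightarrow> nat \<Rightarrow> real" where
  "dphi \<gamma> e ef K L \<sigma> m =
     (let \<phi> = phi_e \<gamma>; eK = e K m; eL = e L m; es = ef \<sigma> m; ekl = xKL \<phi> eK eL in
       \<phi> eK - \<phi> es + deriv \<phi> eK * (ekl - eK)
       + (1/2) * (deriv \<phi> eK + deriv \<phi> eL) * (es - ekl))"

definition dR :: "'a::euclidean_space set set \<Rightarrow> ('a set \<Rightarrow> real) \<Rightarrow> real
      \<Rightarrow> ('a set \<Rightarrow> nat \<Rightarrow> real) \<Rightarrow> ('a set \<Rightarrow> nat \<Rightarrow> real) \<Rightarrow> ('a set \<Rightarrow> nat \<Rightarrow> real)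
      \<Rightarrow> ('a set \<Rightarrow> 'a set \<Rightarrow> nat \<Rightarrow> real) \<Rightarrow> 'a set \<Rightarrow> nat \<Rightarrow> real" where
  "dR Mesh area \<gamma> e ef rhof u K m =
     (\<Sum>\<sigma> \<in> cell_faces K \<inter> int_faces Mesh.
        dphi \<gamma> e ef K (nbr Mesh K \<sigma>) \<sigma> m * (area \<sigma> * rhof \<sigma> m * u K \<sigma> m)) / vol K"

definition norm_xBV :: "'a::euclidean_space set set \<Rightarrow> ('a set \<Rightarrow> real) \<Rightarrow> real \<Rightarrow> nat
                         \<Rightarrow> ('a set \<Rightarrow> nat \<Rightarrow> real) \<Rightarrow> real" where
  "norm_xBV Mesh area dt N z =
     (\<Sum>n \<in> {0..N}. dt * (\<Sum>\<sigma> \<in> int_faces Mesh.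
        area \<sigma> * \<bar>z (nbr Mesh (cell1 Mesh \<sigma>) \<sigma>) n - z (cell1 Mesh \<sigma>) n\<bar>))"

definition grad_norm :: "('a::euclidean_space \<Rightarrow> real \<Rightarrow> real) \<Rightarrow> 'a \<Rightarrow> real \<Rightarrow> real" where
  "grad_norm \<psi> x t = onorm (frechet_derivative (\<lambda>y. \<psi> y t) (at x))"

definition grad_sup :: "'a::euclidean_space set \<Rightarrow> real \<Rightarrow> ('a \<Rightarrow> real \<Rightarrow> real) \<Rightarrow> real" where
  "grad_sup \<Omega> T \<psi> = Sup {grad_norm \<psi> x t | x t. x \<in> \<Omega> \<and> t \<in> {0<..<T}}"

text \<open>Test functions: \<psi> \<in> C_c^\<infinity>([0,T) \<times> closure \<Omega>) with nonzero gradient.\<close>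
definition test_fn :: "'a::euclidean_space set \<Rightarrow> real \<Rightarrow> ('a \<Rightarrow> real \<Rightarrow> real) \<Rightarrow> bool" where
  "test_fn \<Omega> T \<psi> \<longleftrightarrow> smooth_fun (\<lambda>(x, t). \<psi> x t) \<and>
     (\<exists>t0 < T. \<forall>x \<in> closure \<Omega>. \<forall>t \<in> {t0..T}. \<psi> x t = 0) \<and>
     (\<exists>x \<in> \<Omega>. \<exists>t \<in> {0<..<T}. grad_norm \<psi> x t \<noteq> 0)"

definition norm_m11 :: "'a::euclidean_space set \<Rightarrow> 'a set set \<Rightarrow> real \<Rightarrow> nat \<Rightarrow> nat set
                        \<Rightarrow> ('a set \<Rightarrow> nat \<Rightarrow> real) \<Rightarrow> ereal" where
  "norm_m11 \<Omega> Mesh dt N I z =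
     (SUP \<psi> \<in> {\<psi>. test_fn \<Omega> (real N * dt) \<psi>}.
        ereal ((\<Sum>n \<in> I. dt * (\<Sum>K \<in> Mesh. vol K * z K n * \<psi> (center K) (real n * dt)))
               / grad_sup \<Omega> (real N * dt) \<psi>))"

end

theory Submission
  imports Defs
begin


lemma deriv_phi_e:
  assumes "z > 0" shows "deriv (phi_e g) z = - (1/(g-1)) * (1/z)"
proof -
  have "((\<lambda>z. - (1/(g-1)) * ln z) has_real_derivative - (1/(g-1)) * (1/z)) (at z)"
    using assms DERIV_ln[of z] by (intro DERIV_cmult) (simp add: divide_inverse)
  then show ?thesis unfolding phi_e_def[abs_def] by (rule DERIV_imp_deriv)
qed

lemma xKL_expl_between:
  fixes a b :: real
  assumes "a > 0" "b > 0" "a \<noteq> b"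
  shows "min a b \<le> a*b*(ln a - ln b)/(a-b) \<and> a*b*(ln a - ln b)/(a-b) \<le> max a b"
proof -
  have l1: "ln a - ln b \<le> a/b - 1" using ln_le_minus_one[of "a/b"] assms by (simp add: ln_divide_pos)
  have l2: "ln b - ln a \<le> b/a - 1" using ln_le_minus_one[of "b/a"] assms by (simp add: ln_divide_pos)
  have l1': "ln a - ln b \<le> (a - b)/b" using l1 assms by (simp add: field_simps)
  have l2': "(a - b)/a \<le> ln a - ln b" using l2 assms by (simp add: field_simps)
  show ?thesis
  proof (cases "a > b")
    case True
    have d: "a - b > 0" using True by simp
    have "a*b*(ln a - ln b)/(a-b) \<le> a*b*((a-b)/b)/(a-b)"
      using l1' d assms by (intro divide_right_mono mult_left_mono) auto
    also have "\<dots> = a" using d assms by (simp add: field_simps)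
    finally have u: "a*b*(ln a - ln b)/(a-b) \<le> a" .
    have "b = a*b*((a-b)/a)/(a-b)" using d assms by (simp add: field_simps)
    also have "\<dots> \<le> a*b*(ln a - ln b)/(a-b)"
      using l2' d assms by (intro divide_right_mono mult_left_mono) auto
    finally show ?thesis using u True by simp
  next
    case False
    then have F: "b > a" using assms by simp
    have d: "b - a > 0" using F by simp
    have e: "a*b*(ln a - ln b)/(a-b) = a*b*(ln b - ln a)/(b-a)" using d by (simp add: field_simps)
    have l1'': "ln b - ln a \<le> (b - a)/a" using l2 assms by (simp add: field_simps)
    have l2'': "(b - a)/b \<le> ln b - ln a" using l1 assms by (simp add: field_simps)
    have "a*b*(ln b - ln a)/(b-a) \<le> a*b*((b-a)/a)/(b-a)"
      using l1'' d assms by (intro divide_right_mono mult_left_mono) auto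
    also have "\<dots> = b" using d assms by (simp add: field_simps)
    finally have u: "a*b*(ln b - ln a)/(b-a) \<le> b" .
    have "a = a*b*((b-a)/b)/(b-a)" using d assms by (simp add: field_simps)
    also have "\<dots> \<le> a*b*(ln b - ln a)/(b-a)"
      using l2'' d assms by (intro divide_right_mono mult_left_mono) auto
    finally show ?thesis using u F e by simp
  qed
qed

lemma xKL_phi_e:
  fixes a b g :: real
  assumes "a > 0" "b > 0" "g > 1"
  shows "xKL (phi_e g) a b \<in> between a b"
    and "phi_e g a + deriv (phi_e g) a * (xKL (phi_e g) a b - a)
       = phi_e g b + deriv (phi_e g) b * (xKL (phi_e g) a b - b)"
    and "xKL (phi_e g) a b = xKL (phi_e g) b a"
proof -
  let ?P = "\<lambda>a b x. min a b \<le> x \<and> x \<le> max a b \<and>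
             phi_e g a + deriv (phi_e g) a * (x - a) = phi_e g b + deriv (phi_e g) b * (x - b)"
  have c: "1/(g-1) > 0" using assms by simp
  have key: "xKL (phi_e g) a b = a*b*(ln a - ln b)/(a-b) \<and> ?P a b (xKL (phi_e g) a b)"
    if ab: "a > 0" "b > 0" "a \<noteq> b" for a b
  proof -
    let ?x = "a*b*(ln a - ln b)/(a-b)"
    have eqv: "(phi_e g a + deriv (phi_e g) a * (x - a) = phi_e g b + deriv (phi_e g) b * (x - b))
         \<longleftrightarrow> x = ?x" for x
    proof -
      have "(phi_e g a + deriv (phi_e g) a * (x - a) = phi_e g b + deriv (phi_e g) b * (x - b))
          \<longleftrightarrow> (- (1/(g-1))) * (ln a + (x - a)/a) = (- (1/(g-1))) * (ln b + (x-b)/b)"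
        using ab by (simp add: deriv_phi_e phi_e_def algebra_simps)
      also have "\<dots> \<longleftrightarrow> ln a + (x - a)/a = ln b + (x-b)/b" using c by simp
      also have "\<dots> \<longleftrightarrow> x * (a - b) = a*b*(ln a - ln b)" using ab by (simp add: field_simps) argo
      also have "\<dots> \<longleftrightarrow> x = ?x" using ab by (simp add: field_simps)
      finally show ?thesis .
    qed
    have ex: "?P a b ?x" using xKL_expl_between[OF ab] eqv by simp
    have "(THE x. ?P a b x) = ?x"
      by (rule the_equality) (use ex eqv in auto)
    then show ?thesis using ab ex unfolding xKL_def by simp
  qed
  show "xKL (phi_e g) a b \<in> between a b"
    using key[OF assms(1,2)] assms by (cases "a = b") (auto simp: xKL_def between_def)
  show "phi_e g a + deriv (phi_e g) a * (xKL (phi_e g) a b - a)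
       = phi_e g b + deriv (phi_e g) b * (xKL (phi_e g) a b - b)"
    using key[OF assms(1,2)] assms by (cases "a = b") (auto simp: xKL_def)
  show "xKL (phi_e g) a b = xKL (phi_e g) b a"
  proof (cases "a = b")
    case False
    have e1: "xKL (phi_e g) a b = a*b*(ln a - ln b)/(a-b)" using key[OF assms(1,2) False] by blast
    have e2: "xKL (phi_e g) b a = b*a*(ln b - ln a)/(b-a)" using key[OF assms(2,1)] False by auto
    have "a - b \<noteq> 0" "b - a \<noteq> 0" using False by auto
    then have "a*b*(ln a - ln b)/(a-b) = b*a*(ln b - ln a)/(b-a)" by (simp add: field_simps)
    then show ?thesis using e1 e2 by simp
  qed simp
qed


definition dexpr :: "real \<Rightarrow> real \<Rightarrow> real \<Rightarrow> real \<Rightarrow> real" where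
  "dexpr g a b s = phi_e g a - phi_e g s + deriv (phi_e g) a * (xKL (phi_e g) a b - a)
       + (1/2) * (deriv (phi_e g) a + deriv (phi_e g) b) * (s - xKL (phi_e g) a b)"

lemma dphi_dexpr: "dphi g e ef K L \<sigma> m = dexpr g (e K m) (e L m) (ef \<sigma> m)"
  by (simp add: dphi_def dexpr_def Let_def)

lemma dexpr_sym:
  assumes "a > 0" "b > 0" "g > 1"
  shows "dexpr g a b s = dexpr g b a s"
  using xKL_phi_e(2,3)[OF assms] unfolding dexpr_def by (simp add: algebra_simps)

lemma dexpr_bound:
  fixes g M a b s :: real
  assumes g: "g > 1" and M: "M > 0" and a: "a > 0" "1/a \<le> M" and b: "b > 0" "1/b \<le> M"
    and s: "s \<in> between a (xKL (phi_e g) a b)"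
  shows "\<bar>dexpr g a b s\<bar> \<le> (M/(g-1)) * \<bar>a - b\<bar>"
proof -
  define x where "x = xKL (phi_e g) a b"
  define c where "c = 1/(g-1)"
  have c: "c > 0" using g by (simp add: c_def)
  have xb: "x \<in> between a b" using xKL_phi_e(1)[OF a(1) b(1) g] by (simp add: x_def)
  have sb: "min a x \<le> s" "s \<le> max a x" using s by (auto simp: between_def x_def)
  have xb': "min a b \<le> x" "x \<le> max a b" using xb by (auto simp: between_def)
  have spos: "s > 0" using sb xb' a b by (auto simp: min_def split: if_splits)
  have invs: "1/s \<le> M"
  proof -
    have "min a b \<le> s" using sb xb' by (auto simp: min_def split: if_splits)
    then have "1/s \<le> 1/min a b" using a b spos by (intro divide_left_mono) (auto simp: min_def)
    also have "1/min a b \<le> M" using a b by (auto simp: min_def)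
    finally show ?thesis .
  qed
  have E: "dexpr g a b s = c * ((ln s - ln a) - (s - a)/a) + c * (1/2) * (1/a - 1/b) * (s - x)"
  proof -
    have ph: "\<And>z. phi_e g z = - c * ln z" by (simp add: phi_e_def c_def)
    have dd: "\<And>z. z > 0 \<Longrightarrow> deriv (phi_e g) z = - c * (1/z)" by (simp add: deriv_phi_e c_def)
    show ?thesis unfolding dexpr_def x_def[symmetric] ph dd[OF a(1)] dd[OF b(1)]
      using a b spos by (simp add: field_simps)
  qed
  define A where "A = ln s - ln a"
  have A1: "A \<le> (s - a)/a" using ln_le_minus_one[of "s/a"] a spos
    by (simp add: A_def ln_divide_pos diff_divide_distrib)
  have A2: "(s - a)/s \<le> A" using ln_le_minus_one[of "a/s"] a spos
    by (simp add: A_def ln_divide_pos diff_divide_distrib)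
  have "\<bar>(s - a)/s - (s - a)/a\<bar> = \<bar>s - a\<bar> * \<bar>1/s - 1/a\<bar>"
    by (simp add: abs_mult[symmetric] right_diff_distrib)
  also have "\<dots> \<le> \<bar>s - a\<bar> * M"
  proof -
    have p: "1/s > 0" "1/a > 0" using a spos by auto
    have "\<bar>1/s - 1/a\<bar> \<le> M" unfolding abs_le_iff using p invs a(2) by linarith
    then show ?thesis by (intro mult_left_mono) auto
  qed
  finally have D: "\<bar>(s - a)/s - (s - a)/a\<bar> \<le> M * \<bar>s - a\<bar>" by (simp add: mult.commute)
  have nn: "0 \<le> M * \<bar>s - a\<bar>" using M by simp
  have T1: "\<bar>A - (s - a)/a\<bar> \<le> M * \<bar>s - a\<bar>"
    unfolding abs_le_iff using A1 A2 D nn abs_ge_minus_self[of "(s - a)/s - (s - a)/a"] by linarith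
  have "\<bar>(1/a - 1/b) * (s - x)\<bar> = \<bar>1/a - 1/b\<bar> * \<bar>s - x\<bar>" by (simp add: abs_mult)
  also have "\<dots> \<le> M * \<bar>s - x\<bar>"
  proof -
    have p: "1/b > 0" "1/a > 0" using a b by auto
    have "\<bar>1/a - 1/b\<bar> \<le> M" unfolding abs_le_iff using p b(2) a(2) by linarith
    then show ?thesis by (intro mult_right_mono) auto
  qed
  finally have T2: "\<bar>(1/a - 1/b) * (s - x)\<bar> \<le> M * \<bar>s - x\<bar>" .
  have sum: "\<bar>s - a\<bar> + \<bar>s - x\<bar> \<le> \<bar>a - b\<bar>"
    using sb xb' by (auto simp: min_def max_def abs_if split: if_splits)
  have "\<bar>dexpr g a b s\<bar> \<le> c * \<bar>A - (s - a)/a\<bar> + c * (1/2) * \<bar>(1/a - 1/b) * (s - x)\<bar>"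
  proof -
    have "\<bar>dexpr g a b s\<bar> \<le> \<bar>c * (A - (s - a)/a)\<bar> + \<bar>c * (1/2) * ((1/a - 1/b) * (s - x))\<bar>"
      unfolding E A_def by (rule order_trans[OF abs_triangle_ineq]) (simp add: mult.assoc)
    also have "\<dots> = c * \<bar>A - (s - a)/a\<bar> + c * (1/2) * \<bar>(1/a - 1/b) * (s - x)\<bar>"
      using c by (simp add: abs_mult)
    finally show ?thesis .
  qed
  also have "\<dots> \<le> c * (M * \<bar>s - a\<bar>) + c * (1/2) * (M * \<bar>s - x\<bar>)"
    using T1 T2 c by (intro add_mono mult_left_mono) auto
  also have "\<dots> \<le> c * M * (\<bar>s - a\<bar> + \<bar>s - x\<bar>)"
    using c M by (simp add: algebra_simps)
  also have "\<dots> \<le> c * M * \<bar>a - b\<bar>"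
    using sum c M by (intro mult_left_mono) auto
  finally show ?thesis by (simp add: c_def)
qed

lemma dmax: assumes "g > 1" "M > 1"
  shows "max \<bar>deriv (phi_e g) (1/M)\<bar> \<bar>deriv (phi_e g) M\<bar> = M/(g-1)"
proof -
  have "\<bar>deriv (phi_e g) (1/M)\<bar> = M/(g-1)" using assms by (simp add: deriv_phi_e abs_mult)
  moreover have "\<bar>deriv (phi_e g) M\<bar> = 1/((g-1)*M)" using assms by (simp add: deriv_phi_e abs_mult)
  moreover have "1/((g-1)*M) \<le> M/(g-1)"
  proof -
    have "1/M \<le> M" using assms by (simp add: field_simps) (smt (verit) mult_less_cancel_left1)
    then have "(1/M)/(g-1) \<le> M/(g-1)" using assms by (intro divide_right_mono) auto
    then show ?thesis by (simp add: mult.commute)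
  qed
  ultimately show ?thesis by simp
qed



lemma int_face_sym: "int_face Mesh K L \<sigma> \<Longrightarrow> int_face Mesh L K \<sigma>"
  unfolding int_face_def by auto

lemma two_cells:
  assumes mesh: "polytopal_mesh \<Omega> Mesh" and s: "\<sigma> \<in> int_faces Mesh"
  obtains K L where "{K\<in>Mesh. \<sigma> facet_of K} = {K, L}" "K \<noteq> L" "int_face Mesh K L \<sigma>"
proof -
  obtain K L where KL: "int_face Mesh K L \<sigma>" using s unfolding int_faces_def by auto
  have c: "card {K\<in>Mesh. \<sigma> facet_of K} = 2" using mesh s unfolding polytopal_mesh_def by blast
  have sub: "{K, L} \<subseteq> {K\<in>Mesh. \<sigma> facet_of K}" using KL unfolding int_face_def by auto
  have fin: "finite {K\<in>Mesh. \<sigma> facet_of K}"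
  proof (rule ccontr)
    assume "infinite {K\<in>Mesh. \<sigma> facet_of K}"
    then have "card {K\<in>Mesh. \<sigma> facet_of K} = 0" by (rule card.infinite)
    with c show False by simp
  qed
  have KnL: "K \<noteq> L" using KL by (simp add: int_face_def)
  then have "card {K, L} = 2" by simp
  then have "{K, L} = {K\<in>Mesh. \<sigma> facet_of K}" using card_subset_eq[OF fin sub] c by simp
  then show ?thesis using that[of K L] KL KnL by simp
qed

lemma nbr_facts:
  assumes mesh: "polytopal_mesh \<Omega> Mesh" and K: "K \<in> Mesh" and s: "\<sigma> \<in> cell_faces K" "\<sigma> \<in> int_faces Mesh"
  shows "int_face Mesh K (nbr Mesh K \<sigma>) \<sigma>" "nbr Mesh (nbr Mesh K \<sigma>) \<sigma> = K"
    "\<sigma> \<in> cell_faces (nbr Mesh K \<sigma>)" "nbr Mesh K \<sigma> \<in> Mesh" "nbr Mesh K \<sigma> \<noteq> K"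
proof -
  obtain K1 L1 where S: "{K\<in>Mesh. \<sigma> facet_of K} = {K1, L1}" "K1 \<noteq> L1" "int_face Mesh K1 L1 \<sigma>"
    using two_cells[OF mesh s(2)] by blast
  have Kin: "K \<in> {K1, L1}" using S(1) K s(1) unfolding cell_faces_def by blast
  obtain L where L: "{K, L} = {K1, L1}" "K \<noteq> L" "int_face Mesh K L \<sigma>"
  proof (cases "K = K1")
    case True
    then show ?thesis using that S(2,3) by simp
  next
    case False
    then have "K = L1" using Kin by simp
    then show ?thesis using that[of K1] S(2) int_face_sym[OF S(3)] by auto
  qed
  have mem: "(X \<in> Mesh \<and> \<sigma> facet_of X) \<longleftrightarrow> (X = K \<or> X = L)" for X
  proof -
    have "X \<in> {K\<in>Mesh. \<sigma> facet_of K} \<longleftrightarrow> X \<in> {K, L}" using S(1) L(1) by simp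
    then show ?thesis by simp
  qed
  have n1: "nbr Mesh K \<sigma> = L" unfolding nbr_def
  proof (rule the_equality)
    show "L \<in> Mesh \<and> L \<noteq> K \<and> \<sigma> facet_of L" using mem[of L] L(2) by auto
  next
    fix X assume "X \<in> Mesh \<and> X \<noteq> K \<and> \<sigma> facet_of X" then show "X = L" using mem[of X] by auto
  qed
  have n2: "nbr Mesh L \<sigma> = K" unfolding nbr_def
  proof (rule the_equality)
    show "K \<in> Mesh \<and> K \<noteq> L \<and> \<sigma> facet_of K" using mem[of K] L(2) by auto
  next
    fix X assume "X \<in> Mesh \<and> X \<noteq> L \<and> \<sigma> facet_of X" then show "X = K" using mem[of X] by auto
  qed
  have LM: "L \<in> Mesh" "\<sigma> facet_of L" using mem[of L] by auto
  show "int_face Mesh K (nbr Mesh K \<sigma>) \<sigma>" "nbr Mesh (nbr Mesh K \<sigma>) \<sigma> = K"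
    "\<sigma> \<in> cell_faces (nbr Mesh K \<sigma>)" "nbr Mesh K \<sigma> \<in> Mesh" "nbr Mesh K \<sigma> \<noteq> K"
    unfolding n1 n2
  proof -
    show "int_face Mesh K L \<sigma>" by (rule L(3))
    show "K = K" by (rule refl)
    show "\<sigma> \<in> cell_faces L" using LM(2) by (simp add: cell_faces_def)
    show "L \<in> Mesh" by (rule LM(1))
    show "L \<noteq> K" using L(2) by (rule not_sym)
  qed
qed

lemma cell1_facts:
  assumes mesh: "polytopal_mesh \<Omega> Mesh" and s: "\<sigma> \<in> int_faces Mesh"
  shows "cell1 Mesh \<sigma> \<in> Mesh" "\<sigma> \<in> cell_faces (cell1 Mesh \<sigma>)"
proof -
  obtain K L where "int_face Mesh K L \<sigma>" using s unfolding int_faces_def by auto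
  then have "\<exists>K. K \<in> Mesh \<and> \<sigma> facet_of K" unfolding int_face_def by auto
  then have "cell1 Mesh \<sigma> \<in> Mesh \<and> \<sigma> facet_of cell1 Mesh \<sigma>"
    unfolding cell1_def by (rule someI_ex)
  then show "cell1 Mesh \<sigma> \<in> Mesh" "\<sigma> \<in> cell_faces (cell1 Mesh \<sigma>)" unfolding cell_faces_def by auto
qed

lemma fiber:
  assumes mesh: "polytopal_mesh \<Omega> Mesh" and s: "\<sigma> \<in> int_faces Mesh"
  shows "{K. K \<in> Mesh \<and> \<sigma> \<in> cell_faces K} = {cell1 Mesh \<sigma>, nbr Mesh (cell1 Mesh \<sigma>) \<sigma>}"
    "cell1 Mesh \<sigma> \<noteq> nbr Mesh (cell1 Mesh \<sigma>) \<sigma>"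
proof -
  note c = cell1_facts[OF mesh s]
  note n = nbr_facts[OF mesh c(1) c(2) s]
  obtain K1 L1 where S: "{K\<in>Mesh. \<sigma> facet_of K} = {K1, L1}" "K1 \<noteq> L1" "int_face Mesh K1 L1 \<sigma>"
    using two_cells[OF mesh s] by blast
  have mem: "(X \<in> Mesh \<and> \<sigma> facet_of X) \<longleftrightarrow> (X = K1 \<or> X = L1)" for X
  proof -
    have "X \<in> {K\<in>Mesh. \<sigma> facet_of K} \<longleftrightarrow> X \<in> {K1, L1}" using S(1) by simp
    then show ?thesis by simp
  qed
  have i1: "cell1 Mesh \<sigma> \<in> {K1, L1}"
    using mem[of "cell1 Mesh \<sigma>"] c by (simp add: cell_faces_def)
  have i2: "nbr Mesh (cell1 Mesh \<sigma>) \<sigma> \<in> {K1, L1}"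
    using mem[of "nbr Mesh (cell1 Mesh \<sigma>) \<sigma>"] n(3,4) by (simp add: cell_faces_def)
  have "{cell1 Mesh \<sigma>, nbr Mesh (cell1 Mesh \<sigma>) \<sigma>} = {K1, L1}"
    using i1 i2 n(5) S(2) by auto
  then show "{K. K \<in> Mesh \<and> \<sigma> \<in> cell_faces K} = {cell1 Mesh \<sigma>, nbr Mesh (cell1 Mesh \<sigma>) \<sigma>}"
    using mem unfolding cell_faces_def by auto
  show "cell1 Mesh \<sigma> \<noteq> nbr Mesh (cell1 Mesh \<sigma>) \<sigma>" using n(5) by simp
qed

lemma finite_int_faces:
  assumes mesh: "polytopal_mesh \<Omega> Mesh" shows "finite (int_faces Mesh)"
proof -
  have "int_faces Mesh \<subseteq> (\<Union>K\<in>Mesh. cell_faces K)"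
    unfolding int_faces_def int_face_def cell_faces_def by auto
  moreover have "finite (\<Union>K\<in>Mesh. cell_faces K)"
    using mesh unfolding polytopal_mesh_def cell_faces_def by (auto intro: finite_polytope_facets)
  ultimately show ?thesis by (rule finite_subset)
qed

lemma finite_cell_faces:
  assumes mesh: "polytopal_mesh \<Omega> Mesh" "K \<in> Mesh" shows "finite (cell_faces K)"
  using assms unfolding polytopal_mesh_def cell_faces_def by (auto intro: finite_polytope_facets)

lemma sum_faces:
  assumes mesh: "polytopal_mesh \<Omega> Mesh"
  shows "(\<Sum>K\<in>Mesh. \<Sum>\<sigma>\<in>cell_faces K \<inter> int_faces Mesh. f K \<sigma>)
       = (\<Sum>\<sigma>\<in>int_faces Mesh. f (cell1 Mesh \<sigma>) \<sigma> + f (nbr Mesh (cell1 Mesh \<sigma>) \<sigma>) \<sigma>)"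
proof -
  have fM: "finite Mesh" using mesh unfolding polytopal_mesh_def by blast
  have "(\<Sum>K\<in>Mesh. \<Sum>\<sigma>\<in>cell_faces K \<inter> int_faces Mesh. f K \<sigma>)
      = (\<Sum>K\<in>Mesh. \<Sum>\<sigma>\<in>{\<sigma>. \<sigma> \<in> int_faces Mesh \<and> \<sigma> \<in> cell_faces K}. f K \<sigma>)"
    by (intro sum.cong) auto
  also have "\<dots> = (\<Sum>\<sigma>\<in>int_faces Mesh. \<Sum>K\<in>{K. K \<in> Mesh \<and> \<sigma> \<in> cell_faces K}. f K \<sigma>)"
    by (rule sum.swap_restrict[OF fM finite_int_faces[OF mesh]])
  also have "\<dots> = (\<Sum>\<sigma>\<in>int_faces Mesh. f (cell1 Mesh \<sigma>) \<sigma> + f (nbr Mesh (cell1 Mesh \<sigma>) \<sigma>) \<sigma>)"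
    by (intro sum.cong refl) (simp add: fiber[OF mesh])
  finally show ?thesis .
qed



lemma vol_pos:
  fixes K :: "'a::euclidean_space set"
  assumes "polytope K" "interior K \<noteq> {}"
  shows "vol K > 0"
proof -
  have lm: "K \<in> lmeasurable" using assms(1) by (intro lmeasurable_compact polytope_imp_compact)
  have "\<not> negligible K" using negligible_convex_interior[OF polytope_imp_convex[OF assms(1)]] assms(2) by simp
  then have "measure lebesgue K \<noteq> 0" using negligible_iff_measure0[OF lm] by simp
  then show ?thesis unfolding vol_def using measure_nonneg[of lebesgue K] by linarith
qed

lemma center_in:
  fixes K :: "'a::euclidean_space set"
  assumes "polytope K" "interior K \<noteq> {}"
  shows "center K \<in> K"
proof (rule ccontr)
  assume nK: "center K \<notin> K"
  have cvx: "convex K" using assms(1) by (rule polytope_imp_convex)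
  have cpt: "compact K" using assms(1) by (rule polytope_imp_compact)
  obtain a b where ab: "inner a (center K) < b" "\<forall>x\<in>K. inner a x > b"
    using separating_hyperplane_closed_point[OF cvx compact_imp_closed[OF cpt] nK] by blast
  have lm: "K \<in> lmeasurable" using cpt by (rule lmeasurable_compact)
  obtain r where r: "K \<subseteq> cbox (-r) r" using bounded_subset_cbox_symmetric compact_imp_bounded[OF cpt] by metis
  have "(\<lambda>x. x) absolutely_integrable_on cbox (-r) r"
    by (intro absolutely_integrable_continuous continuous_intros)
  then have ai: "(\<lambda>x. x) absolutely_integrable_on K"
    by (rule set_integrable_subset[OF _ fmeasurableD[OF lm] r])
  then have int: "(\<lambda>x. x) integrable_on K" by (rule set_lebesgue_integral_eq_integral(1))
  have int2: "(\<lambda>x. inner a x) integrable_on K"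
    using integrable_linear[OF int bounded_linear_inner_right[of a]] by (simp add: o_def)
  have int3: "(\<lambda>x. b) integrable_on K" using lm by (rule integrable_on_const)
  have "integral K (\<lambda>x. inner a x) = inner a (integral K (\<lambda>x. x))"
    using integral_linear[OF int bounded_linear_inner_right[of a]] by (simp add: o_def)
  moreover have "integral K (\<lambda>x. b) \<le> integral K (\<lambda>x. inner a x)"
  proof (rule integral_le[OF int3 int2])
    fix x assume "x \<in> K" then show "b \<le> inner a x" using ab(2) by (simp add: less_imp_le)
  qed
  moreover have "integral K (\<lambda>x. b) = b * vol K"
  proof -
    have "integral K (\<lambda>x. b) = integral K (\<lambda>x. 1 * b)" by simp
    also have "\<dots> = integral K (\<lambda>x. 1::real) * b" by (rule integral_mult_left)
    also have "\<dots> = vol K * b" using lmeasure_integral[OF lm] unfolding vol_def by simp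
    finally show ?thesis by simp
  qed
  ultimately have "b * vol K \<le> inner a (integral K (\<lambda>x. x))" by simp
  moreover have "inner a (integral K (\<lambda>x. x)) = vol K * inner a (center K)"
    using vol_pos[OF assms] unfolding center_def by (simp add: inner_scaleR_right)
  ultimately have "b * vol K \<le> vol K * inner a (center K)" by simp
  then have "b \<le> inner a (center K)" using vol_pos[OF assms] by (simp add: mult.commute)
  then show False using ab(1) by simp
qed



lemma grad_facts:
  fixes \<Omega> :: "'a::euclidean_space set" and \<psi> :: "'a \<Rightarrow> real \<Rightarrow> real"
  assumes tf: "test_fn \<Omega> T \<psi>" and T: "T > 0" and bd: "bounded \<Omega>"
  shows "grad_sup \<Omega> T \<psi> > 0"
    and "\<And>K a b t. convex K \<Longrightarrow> K \<subseteq> closure \<Omega> \<Longrightarrow> a \<in> K \<Longrightarrow> b \<in> K \<Longrightarrow> t \<in> {0..T}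
           \<Longrightarrow> \<bar>\<psi> a t - \<psi> b t\<bar> \<le> grad_sup \<Omega> T \<psi> * norm (a - b)"
proof -
  define F where "F = (\<lambda>(x, t). \<psi> x t)"
  define Df where "Df p = frechet_derivative F (at p)" for p
  have sm: "smooth_fun F" using tf unfolding test_fn_def F_def by blast
  have diff: "F differentiable at p" for p
  proof -
    have "dderiv [] F differentiable_on UNIV" using sm unfolding smooth_fun_def by blast
    then show ?thesis unfolding differentiable_on_def by (cases p) simp
  qed
  have hasD: "(F has_derivative Df p) (at p)" for p
    unfolding Df_def using diff by (rule frechet_derivative_works[THEN iffD1])
  have contD: "continuous_on UNIV (\<lambda>p. Df p v)" for v
  proof -
    have "dderiv [v] F differentiable_on UNIV" using sm unfolding smooth_fun_def by blast
    then have "(\<lambda>p. Df p v) differentiable_on UNIV" by (simp add: Df_def)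
    then show ?thesis by (rule differentiable_imp_continuous_on)
  qed
  have partial: "((\<lambda>y. \<psi> y t) has_derivative (\<lambda>w. Df (y, t) (w, 0))) (at y)" for y t
  proof -
    have p1: "((\<lambda>y. (y, t)) has_derivative (\<lambda>w. (w, 0))) (at y)"
      by (auto intro!: derivative_eq_intros)
    have "(F \<circ> (\<lambda>y. (y, t)) has_derivative Df (y, t) \<circ> (\<lambda>w. (w, 0))) (at y)"
      using diff_chain_at[OF p1 hasD] by simp
    then show ?thesis by (simp add: F_def o_def)
  qed
  have gn: "grad_norm \<psi> y t = onorm (\<lambda>w. Df (y, t) (w, 0))" for y t
    unfolding grad_norm_def using frechet_derivative_at[OF partial[where y=y and t=t]] by simp
  have bl2: "bounded_linear (\<lambda>w. Df (y, t) (w, 0))" for y t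
    using partial[where y=y and t=t] by (rule has_derivative_bounded_linear)
  define S where "S = closure \<Omega> \<times> {0..T}"
  have cS: "compact S" unfolding S_def using bd by (intro compact_Times compact_Icc) (simp add: compact_closure)
  have "\<forall>i\<in>Basis. \<exists>c. \<forall>p\<in>S. \<bar>Df p (i, 0)\<bar> \<le> c"
  proof
    fix i :: 'a
    have "compact ((\<lambda>p. Df p (i, 0)) ` S)"
      using cS contD by (intro compact_continuous_image) (auto intro: continuous_on_subset)
    then have "bounded ((\<lambda>p. Df p (i, 0)) ` S)" by (rule compact_imp_bounded)
    then obtain c where "\<forall>x\<in>(\<lambda>p. Df p (i, 0)) ` S. norm x \<le> c" unfolding bounded_iff by blast
    then show "\<exists>c. \<forall>p\<in>S. \<bar>Df p (i, 0)\<bar> \<le> c" by auto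
  qed
  then obtain C where C: "\<And>i p. i \<in> Basis \<Longrightarrow> p \<in> S \<Longrightarrow> \<bar>Df p (i, 0)\<bar> \<le> C i" by metis
  define B where "B = (\<Sum>i\<in>Basis. C i)"
  have Bb: "\<bar>Df (y, t) (w, 0)\<bar> \<le> B * norm w" if yt: "(y, t) \<in> S" for y t w
  proof -
    have lin: "linear (\<lambda>w. Df (y, t) (w, 0))" using bl2 bounded_linear.linear by blast
    have "Df (y, t) (w, 0) = (\<Sum>i\<in>Basis. (w \<bullet> i) * Df (y, t) (i, 0))"
      using Linear_Algebra.linear_componentwise[OF lin, of w 1] by simp
    then have "\<bar>Df (y, t) (w, 0)\<bar> \<le> (\<Sum>i\<in>Basis. \<bar>(w \<bullet> i) * Df (y, t) (i, 0)\<bar>)"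
      by (simp add: sum_abs)
    also have "\<dots> \<le> (\<Sum>i\<in>Basis. norm w * C i)"
    proof (rule sum_mono)
      fix i :: 'a assume i: "i \<in> Basis"
      have "\<bar>(w \<bullet> i) * Df (y, t) (i, 0)\<bar> = \<bar>w \<bullet> i\<bar> * \<bar>Df (y, t) (i, 0)\<bar>" by (simp add: abs_mult)
      also have "\<dots> \<le> norm w * C i"
        using C[OF i yt] Basis_le_norm[OF i, of w] by (intro mult_mono) auto
      finally show "\<bar>(w \<bullet> i) * Df (y, t) (i, 0)\<bar> \<le> norm w * C i" .
    qed
    also have "\<dots> = B * norm w" by (simp add: B_def sum_distrib_left mult.commute)
    finally show ?thesis .
  qed
  define A where "A = {grad_norm \<psi> x t | x t. x \<in> \<Omega> \<and> t \<in> {0<..<T}}"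
  have G: "grad_sup \<Omega> T \<psi> = Sup A" unfolding grad_sup_def A_def by simp
  have bdd: "bdd_above A"
  proof (rule bdd_aboveI)
    fix z assume "z \<in> A"
    then obtain x t where xt: "z = grad_norm \<psi> x t" "x \<in> \<Omega>" "t \<in> {0<..<T}" unfolding A_def by blast
    have "(x, t) \<in> S" using xt closure_subset unfolding S_def by fastforce
    then have "onorm (\<lambda>w. Df (x, t) (w, 0)) \<le> B" using Bb by (intro onorm_le) simp
    then show "z \<le> B" using xt gn by simp
  qed
  have up: "grad_norm \<psi> x t \<le> grad_sup \<Omega> T \<psi>" if "x \<in> \<Omega>" "t \<in> {0<..<T}" for x t
    unfolding G using that bdd by (intro cSup_upper) (auto simp: A_def)
  obtain x0 t0 where x0: "x0 \<in> \<Omega>" "t0 \<in> {0<..<T}" "grad_norm \<psi> x0 t0 \<noteq> 0"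
    using tf unfolding test_fn_def by blast
  have "grad_norm \<psi> x0 t0 \<ge> 0" unfolding gn by (rule onorm_pos_le[OF bl2])
  then show "grad_sup \<Omega> T \<psi> > 0" using up[OF x0(1,2)] x0(3) by linarith
  have clos: "\<bar>Df p (w, 0)\<bar> \<le> grad_sup \<Omega> T \<psi> * norm w" if p: "p \<in> closure \<Omega> \<times> {0..T}" for p w
  proof -
    let ?Q = "{p. \<bar>Df p (w, 0)\<bar> \<le> grad_sup \<Omega> T \<psi> * norm w}"
    have "closed ?Q" using contD[of "(w, 0)"] by (intro closed_Collect_le continuous_intros) auto
    moreover have "\<Omega> \<times> {0<..<T} \<subseteq> ?Q"
    proof
      fix q assume "q \<in> \<Omega> \<times> {0<..<T}"
      then obtain x t where q: "q = (x, t)" "x \<in> \<Omega>" "t \<in> {0<..<T}" by blast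
      have "\<bar>Df (x, t) (w, 0)\<bar> \<le> onorm (\<lambda>w. Df (x, t) (w, 0)) * norm w"
        using onorm[OF bl2[where y=x and t=t], of w] by simp
      also have "\<dots> \<le> grad_sup \<Omega> T \<psi> * norm w"
        using up[OF q(2,3)] gn by (intro mult_right_mono) auto
      finally show "q \<in> ?Q" using q by simp
    qed
    ultimately have "closure (\<Omega> \<times> {0<..<T}) \<subseteq> ?Q" by (rule closure_minimal[rotated])
    moreover have "closure (\<Omega> \<times> {0<..<T}) = closure \<Omega> \<times> {0..T}" using T by (simp add: closure_Times)
    ultimately show ?thesis using p by auto
  qed
  fix K a b t
  assume K: "convex K" "K \<subseteq> closure \<Omega>" and a: "a \<in> K" and b: "b \<in> K" and t: "t \<in> {0..T}"
  have "norm ((\<lambda>y. \<psi> y t) a - (\<lambda>y. \<psi> y t) b) \<le> grad_sup \<Omega> T \<psi> * norm (a - b)"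
  proof (rule differentiable_bound[OF K(1) _ _ a b])
    fix y assume "y \<in> K"
    show "((\<lambda>y. \<psi> y t) has_derivative (\<lambda>w. Df (y, t) (w, 0))) (at y within K)"
      using partial by (rule has_derivative_at_withinI)
    show "onorm (\<lambda>w. Df (y, t) (w, 0)) \<le> grad_sup \<Omega> T \<psi>"
    proof (rule onorm_le)
      fix w have "(y, t) \<in> closure \<Omega> \<times> {0..T}" using \<open>y \<in> K\<close> K(2) t by auto
      then show "norm (Df (y, t) (w, 0)) \<le> grad_sup \<Omega> T \<psi> * norm w" using clos by simp
    qed
  qed
  then show "\<bar>\<psi> a t - \<psi> b t\<bar> \<le> grad_sup \<Omega> T \<psi> * norm (a - b)" by simp
qed


theorem lemma2p8:
  fixes \<Omega> :: "'a::euclidean_space set" and Mesh :: "'a set set"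
    and area :: "'a set \<Rightarrow> real"
    and \<gamma> M dt :: real and N :: nat
    and rho e :: "'a set \<Rightarrow> nat \<Rightarrow> real"
    and rhof ef :: "'a set \<Rightarrow> nat \<Rightarrow> real"
    and u :: "'a set \<Rightarrow> 'a set \<Rightarrow> nat \<Rightarrow> real"
  assumes mesh: "polytopal_mesh \<Omega> Mesh"
    and area_pos: "\<And>\<sigma>. \<sigma> \<in> int_faces Mesh \<Longrightarrow> area \<sigma> > 0"
    and dt: "dt > 0" and N: "N \<ge> 1"
    and gamma: "\<gamma> > 1" and M: "M > 1"
    and u_antisym: "\<And>K L \<sigma> n. int_face Mesh K L \<sigma> \<Longrightarrow> n \<le> N \<Longrightarrow> u L \<sigma> n = - u K \<sigma> n"
    and u_bdry: "\<And>K \<sigma> n. K \<in> Mesh \<Longrightarrow> \<sigma> \<in> cell_faces K \<Longrightarrow> \<sigma> \<notin> int_faces Mesh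
                   \<Longrightarrow> n \<le> N \<Longrightarrow> u K \<sigma> n = 0"
    and rho_pos: "\<And>K n. K \<in> Mesh \<Longrightarrow> n \<le> N \<Longrightarrow> rho K n > 0"
    and e_pos: "\<And>K n. K \<in> Mesh \<Longrightarrow> n \<le> N \<Longrightarrow> e K n > 0"
    and e_face: "\<And>K L \<sigma> n. int_face Mesh K L \<sigma> \<Longrightarrow> n < N \<Longrightarrow> u K \<sigma> (n+1) > 0 \<Longrightarrow>
                   ef \<sigma> (n+1) \<in> between (e K (n+1)) (xKL (phi_e \<gamma>) (e K (n+1)) (e L (n+1)))"
    and rho_bd: "\<And>K n. K \<in> Mesh \<Longrightarrow> n \<le> N \<Longrightarrow> rho K n \<le> M"
    and e_bd: "\<And>K n. K \<in> Mesh \<Longrightarrow> n \<le> N \<Longrightarrow> e K n \<le> M"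
    and e_inv_bd: "\<And>K n. K \<in> Mesh \<Longrightarrow> n \<le> N \<Longrightarrow> 1 / e K n \<le> M"
    and u_bd: "\<And>K \<sigma> n. K \<in> Mesh \<Longrightarrow> \<sigma> \<in> cell_faces K \<Longrightarrow> n \<le> N \<Longrightarrow> \<bar>u K \<sigma> n\<bar> \<le> M"
    and rhof_bd: "\<And>\<sigma> n. \<sigma> \<in> int_faces Mesh \<Longrightarrow> n < N \<Longrightarrow> \<bar>rhof \<sigma> (n+1)\<bar> \<le> M"
  shows "norm_m11 \<Omega> Mesh dt N {1..N} (dR Mesh area \<gamma> e ef rhof u)
           \<le> ereal (3 * M^2 * max \<bar>deriv (phi_e \<gamma>) (1/M)\<bar> \<bar>deriv (phi_e \<gamma>) M\<bar>
                     * norm_xBV Mesh area dt N e * mesh_size Mesh)"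
proof -
  define c where "c = M / (\<gamma> - 1)"
  define H where "H = mesh_size Mesh"
  define T where "T = real N * dt"
  define K1 where "K1 \<sigma> = cell1 Mesh \<sigma>" for \<sigma>
  define L1 where "L1 \<sigma> = nbr Mesh (K1 \<sigma>) \<sigma>" for \<sigma>
  define g where "g n K \<sigma> = dphi \<gamma> e ef K (nbr Mesh K \<sigma>) \<sigma> n * (area \<sigma> * rhof \<sigma> n * u K \<sigma> n)" for n K \<sigma>
  define BVn where "BVn n = (\<Sum>\<sigma>\<in>int_faces Mesh. area \<sigma> * \<bar>e (L1 \<sigma>) n - e (K1 \<sigma>) n\<bar>)" for n
  have c0: "c > 0" using gamma M by (simp add: c_def)
  have T0: "T > 0" using dt N by (simp add: T_def)
  have fM: "finite Mesh" and bdO: "bounded \<Omega>" using mesh unfolding polytopal_mesh_def by auto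
  have polyK: "polytope K" "interior K \<noteq> {}" if "K \<in> Mesh" for K
    using mesh that unfolding polytopal_mesh_def by auto
  have KsubO: "K \<subseteq> closure \<Omega>" if "K \<in> Mesh" for K
    using mesh that unfolding polytopal_mesh_def by auto
  have sf: "K1 \<sigma> \<in> Mesh" "\<sigma> \<in> cell_faces (K1 \<sigma>)" "int_face Mesh (K1 \<sigma>) (L1 \<sigma>) \<sigma>"
     "nbr Mesh (L1 \<sigma>) \<sigma> = K1 \<sigma>" "L1 \<sigma> \<in> Mesh" "\<sigma> \<in> cell_faces (L1 \<sigma>)"
    if s: "\<sigma> \<in> int_faces Mesh" for \<sigma>
  proof -
    note cf = cell1_facts[OF mesh s]
    note nf = nbr_facts[OF mesh cf(1) cf(2) s]
    show "K1 \<sigma> \<in> Mesh" "\<sigma> \<in> cell_faces (K1 \<sigma>)" "int_face Mesh (K1 \<sigma>) (L1 \<sigma>) \<sigma>"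
     "nbr Mesh (L1 \<sigma>) \<sigma> = K1 \<sigma>" "L1 \<sigma> \<in> Mesh" "\<sigma> \<in> cell_faces (L1 \<sigma>)"
      using cf nf unfolding K1_def L1_def by auto
  qed
  have BV: "norm_xBV Mesh area dt N e = (\<Sum>n\<in>{0..N}. dt * BVn n)"
    unfolding norm_xBV_def BVn_def K1_def L1_def by simp
  have BVn0: "BVn n \<ge> 0" for n
    unfolding BVn_def using area_pos by (intro sum_nonneg mult_nonneg_nonneg) (auto simp: less_imp_le)
  have A: "(\<Sum>K\<in>Mesh. vol K * dR Mesh area \<gamma> e ef rhof u K n * \<psi> (center K) t)
     = (\<Sum>\<sigma>\<in>int_faces Mesh. g n (K1 \<sigma>) \<sigma> * (\<psi> (center (K1 \<sigma>)) t - \<psi> (center (L1 \<sigma>)) t))"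
    if n: "n \<in> {1..N}" for n and \<psi> :: "'a \<Rightarrow> real \<Rightarrow> real" and t
  proof -
    have "(\<Sum>K\<in>Mesh. vol K * dR Mesh area \<gamma> e ef rhof u K n * \<psi> (center K) t)
        = (\<Sum>K\<in>Mesh. \<Sum>\<sigma>\<in>cell_faces K \<inter> int_faces Mesh. g n K \<sigma> * \<psi> (center K) t)"
    proof (rule sum.cong[OF refl])
      fix K assume K: "K \<in> Mesh"
      have "vol K \<noteq> 0" using vol_pos[OF polyK[OF K]] by simp
      then show "vol K * dR Mesh area \<gamma> e ef rhof u K n * \<psi> (center K) t
          = (\<Sum>\<sigma>\<in>cell_faces K \<inter> int_faces Mesh. g n K \<sigma> * \<psi> (center K) t)"
        unfolding dR_def g_def by (simp add: sum_distrib_right)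
    qed
    also have "\<dots> = (\<Sum>\<sigma>\<in>int_faces Mesh. g n (K1 \<sigma>) \<sigma> * \<psi> (center (K1 \<sigma>)) t
                        + g n (L1 \<sigma>) \<sigma> * \<psi> (center (L1 \<sigma>)) t)"
      unfolding sum_faces[OF mesh] K1_def L1_def by simp
    also have "\<dots> = (\<Sum>\<sigma>\<in>int_faces Mesh. g n (K1 \<sigma>) \<sigma> * (\<psi> (center (K1 \<sigma>)) t - \<psi> (center (L1 \<sigma>)) t))"
    proof (rule sum.cong[OF refl])
      fix \<sigma> assume s: "\<sigma> \<in> int_faces Mesh"
      have nN: "n \<le> N" using n by simp
      have eK: "e (K1 \<sigma>) n > 0" and eL: "e (L1 \<sigma>) n > 0" using e_pos sf[OF s] nN by auto
      have ua: "u (L1 \<sigma>) \<sigma> n = - u (K1 \<sigma>) \<sigma> n" using u_antisym[OF sf(3)[OF s] nN] .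
      have "dphi \<gamma> e ef (L1 \<sigma>) (K1 \<sigma>) \<sigma> n = dphi \<gamma> e ef (K1 \<sigma>) (L1 \<sigma>) \<sigma> n"
        unfolding dphi_dexpr using dexpr_sym[OF eL eK gamma] by simp
      then have "g n (L1 \<sigma>) \<sigma> = - g n (K1 \<sigma>) \<sigma>"
        unfolding g_def sf(4)[OF s] ua by (simp add: L1_def)
      then show "g n (K1 \<sigma>) \<sigma> * \<psi> (center (K1 \<sigma>)) t + g n (L1 \<sigma>) \<sigma> * \<psi> (center (L1 \<sigma>)) t
          = g n (K1 \<sigma>) \<sigma> * (\<psi> (center (K1 \<sigma>)) t - \<psi> (center (L1 \<sigma>)) t)"
        by (simp add: algebra_simps)
    qed
    finally show ?thesis .
  qed
  have B: "\<bar>g n (K1 \<sigma>) \<sigma>\<bar> \<le> area \<sigma> * (M * M * c) * \<bar>e (L1 \<sigma>) n - e (K1 \<sigma>) n\<bar>"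
    if n: "n \<in> {1..N}" and s: "\<sigma> \<in> int_faces Mesh" for n \<sigma>
  proof -
    have nN: "n \<le> N" using n by simp
    obtain m where m: "n = m + 1" "m < N" using n by (metis Suc_eq_plus1 Suc_le_lessD atLeastAtMost_iff not0_implies_Suc not_one_le_zero)
    note S = sf[OF s]
    have eK: "e (K1 \<sigma>) n > 0" "1 / e (K1 \<sigma>) n \<le> M" and eL: "e (L1 \<sigma>) n > 0" "1 / e (L1 \<sigma>) n \<le> M"
      using e_pos e_inv_bd S nN by auto
    have M0: "M > 0" using M by simp
    have dbound: "\<bar>dphi \<gamma> e ef (K1 \<sigma>) (L1 \<sigma>) \<sigma> n\<bar> * \<bar>u (K1 \<sigma>) \<sigma> n\<bar>
        \<le> (c * \<bar>e (L1 \<sigma>) n - e (K1 \<sigma>) n\<bar>) * M"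
    proof (cases "u (K1 \<sigma>) \<sigma> n = 0")
      case True then show ?thesis using c0 M0 by simp
    next
      case False
      have d: "\<bar>dphi \<gamma> e ef (K1 \<sigma>) (L1 \<sigma>) \<sigma> n\<bar> \<le> c * \<bar>e (L1 \<sigma>) n - e (K1 \<sigma>) n\<bar>"
      proof (cases "u (K1 \<sigma>) \<sigma> n > 0")
        case True
        have "ef \<sigma> n \<in> between (e (K1 \<sigma>) n) (xKL (phi_e \<gamma>) (e (K1 \<sigma>) n) (e (L1 \<sigma>) n))"
          using e_face[OF S(3) m(2)] True m(1) by simp
        then show ?thesis unfolding dphi_dexpr c_def
          using dexpr_bound[OF gamma M0 eK eL] by (simp add: abs_minus_commute)
      next
        case False
        then have up: "u (L1 \<sigma>) \<sigma> n > 0" using \<open>u (K1 \<sigma>) \<sigma> n \<noteq> 0\<close> u_antisym[OF S(3) nN] by simp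
        have "ef \<sigma> n \<in> between (e (L1 \<sigma>) n) (xKL (phi_e \<gamma>) (e (L1 \<sigma>) n) (e (K1 \<sigma>) n))"
          using e_face[OF int_face_sym[OF S(3)] m(2)] up m(1) by simp
        then show ?thesis unfolding dphi_dexpr c_def
          using dexpr_bound[OF gamma M0 eL eK] dexpr_sym[OF eK(1) eL(1) gamma] by simp
      qed
      have uu: "\<bar>u (K1 \<sigma>) \<sigma> n\<bar> \<le> M" using u_bd S nN by auto
      show ?thesis using d uu by (intro mult_mono) auto
    qed
    have rb: "\<bar>rhof \<sigma> n\<bar> \<le> M" using rhof_bd[OF s m(2)] m(1) by simp
    have "\<bar>g n (K1 \<sigma>) \<sigma>\<bar> = area \<sigma> * \<bar>rhof \<sigma> n\<bar> * (\<bar>dphi \<gamma> e ef (K1 \<sigma>) (L1 \<sigma>) \<sigma> n\<bar> * \<bar>u (K1 \<sigma>) \<sigma> n\<bar>)"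
      unfolding g_def L1_def using area_pos[OF s] by (simp add: abs_mult)
    also have "\<dots> \<le> area \<sigma> * M * ((c * \<bar>e (L1 \<sigma>) n - e (K1 \<sigma>) n\<bar>) * M)"
    proof (rule mult_mono[OF mult_left_mono[OF rb] dbound])
      show "0 \<le> area \<sigma>" "0 \<le> area \<sigma> * M" using area_pos[OF s] M by auto
      show "0 \<le> \<bar>dphi \<gamma> e ef (K1 \<sigma>) (L1 \<sigma>) \<sigma> n\<bar> * \<bar>u (K1 \<sigma>) \<sigma> n\<bar>" by simp
    qed
    also have "\<dots> = area \<sigma> * (M * M * c) * \<bar>e (L1 \<sigma>) n - e (K1 \<sigma>) n\<bar>" by (simp add: algebra_simps)
    finally show ?thesis .
  qed
  have Hge: "diameter X \<le> H" if "X \<in> Mesh" for X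
    unfolding H_def mesh_size_def using fM that by (intro Max_ge) auto
  have C: "\<bar>\<psi> (center (K1 \<sigma>)) t - \<psi> (center (L1 \<sigma>)) t\<bar> \<le> 2 * H * grad_sup \<Omega> T \<psi>"
    if tf: "test_fn \<Omega> T \<psi>" and s: "\<sigma> \<in> int_faces Mesh" and t: "t \<in> {0..T}" for \<psi> \<sigma> t
  proof -
    note S = sf[OF s]
    have "\<sigma> facet_of K1 \<sigma>" and sKL: "\<sigma> = K1 \<sigma> \<inter> L1 \<sigma>" using S(3) unfolding int_face_def by auto
    then obtain p where p: "p \<in> \<sigma>" unfolding facet_of_def by blast
    have near: "\<bar>\<psi> (center X) t - \<psi> p t\<bar> \<le> H * grad_sup \<Omega> T \<psi>" if X: "X \<in> Mesh" "p \<in> X" for X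
    proof -
      have cX: "center X \<in> X" using center_in[OF polyK[OF X(1)]] .
      have "\<bar>\<psi> (center X) t - \<psi> p t\<bar> \<le> grad_sup \<Omega> T \<psi> * norm (center X - p)"
        using grad_facts(2)[OF tf T0 bdO polytope_imp_convex[OF polyK(1)[OF X(1)]] KsubO[OF X(1)] cX X(2) t] .
      also have "\<dots> \<le> grad_sup \<Omega> T \<psi> * H"
      proof (rule mult_left_mono)
        have "norm (center X - p) = dist (center X) p" by (simp add: dist_norm)
        also have "\<dots> \<le> diameter X"
          using compact_imp_bounded[OF polytope_imp_compact[OF polyK(1)[OF X(1)]]] cX X(2)
          by (rule diameter_bounded_bound)
        also have "\<dots> \<le> H" using Hge[OF X(1)] .
        finally show "norm (center X - p) \<le> H" .
        show "0 \<le> grad_sup \<Omega> T \<psi>" using grad_facts(1)[OF tf T0 bdO] by simp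
      qed
      finally show ?thesis by (simp add: mult.commute)
    qed
    have "p \<in> K1 \<sigma>" "p \<in> L1 \<sigma>" using p sKL by auto
    then have "\<bar>\<psi> (center (K1 \<sigma>)) t - \<psi> p t\<bar> \<le> H * grad_sup \<Omega> T \<psi>"
      "\<bar>\<psi> (center (L1 \<sigma>)) t - \<psi> p t\<bar> \<le> H * grad_sup \<Omega> T \<psi>"
      using near S(1,5) by auto
    then show ?thesis by linarith
  qed
  have cmax: "max \<bar>deriv (phi_e \<gamma>) (1/M)\<bar> \<bar>deriv (phi_e \<gamma>) M\<bar> = c"
    unfolding c_def by (rule dmax[OF gamma M])
  show ?thesis
    unfolding norm_m11_def T_def[symmetric] cmax
  proof (rule SUP_least)
    fix \<psi> assume "\<psi> \<in> {\<psi>. test_fn \<Omega> T \<psi>}"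
    then have tf: "test_fn \<Omega> T \<psi>" by simp
    define G where "G = grad_sup \<Omega> T \<psi>"
    have G0: "G > 0" unfolding G_def by (rule grad_facts(1)[OF tf T0 bdO])
    define Sn where "Sn = (\<Sum>n\<in>{1..N}. dt * (\<Sum>K\<in>Mesh. vol K * dR Mesh area \<gamma> e ef rhof u K n * \<psi> (center K) (real n * dt)))"
    have Sle: "Sn \<le> 3 * M\<^sup>2 * c * norm_xBV Mesh area dt N e * H * G"
    proof (cases "int_faces Mesh = {}")
      case True
      have "Sn = 0" unfolding Sn_def by (intro sum.neutral ballI) (simp add: A True)
      moreover have "norm_xBV Mesh area dt N e = 0" unfolding BV BVn_def True by simp
      ultimately show ?thesis by simp
    next
      case False
      then obtain \<sigma>0 where s0: "\<sigma>0 \<in> int_faces Mesh" by blast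
      have H0: "H \<ge> 0"
        using Hge[OF sf(1)[OF s0]] diameter_ge_0[OF compact_imp_bounded[OF polytope_imp_compact[OF polyK(1)[OF sf(1)[OF s0]]]]]
        by linarith
      define Kc where "Kc = (M * M * c) * (2 * H * G)"
      have Kc0: "Kc \<ge> 0" unfolding Kc_def using c0 H0 G0 by simp
      have "Sn = (\<Sum>n\<in>{1..N}. dt * (\<Sum>\<sigma>\<in>int_faces Mesh. g n (K1 \<sigma>) \<sigma> *
                 (\<psi> (center (K1 \<sigma>)) (real n * dt) - \<psi> (center (L1 \<sigma>)) (real n * dt))))"
        unfolding Sn_def by (intro sum.cong refl) (simp add: A)
      also have "\<dots> \<le> (\<Sum>n\<in>{1..N}. dt * (Kc * BVn n))"
      proof (rule sum_mono)
        fix n assume n: "n \<in> {1..N}"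
        have tn: "real n * dt \<in> {0..T}" using n dt unfolding T_def by (auto intro: mult_right_mono)
        have "(\<Sum>\<sigma>\<in>int_faces Mesh. g n (K1 \<sigma>) \<sigma> * (\<psi> (center (K1 \<sigma>)) (real n * dt) - \<psi> (center (L1 \<sigma>)) (real n * dt)))
            \<le> (\<Sum>\<sigma>\<in>int_faces Mesh. \<bar>g n (K1 \<sigma>) \<sigma>\<bar> * \<bar>\<psi> (center (K1 \<sigma>)) (real n * dt) - \<psi> (center (L1 \<sigma>)) (real n * dt)\<bar>)"
          by (intro sum_mono) (simp add: abs_mult[symmetric])
        also have "\<dots> \<le> (\<Sum>\<sigma>\<in>int_faces Mesh. (area \<sigma> * (M * M * c) * \<bar>e (L1 \<sigma>) n - e (K1 \<sigma>) n\<bar>) * (2 * H * G))"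
        proof (rule sum_mono)
          fix \<sigma> assume s: "\<sigma> \<in> int_faces Mesh"
          show "\<bar>g n (K1 \<sigma>) \<sigma>\<bar> * \<bar>\<psi> (center (K1 \<sigma>)) (real n * dt) - \<psi> (center (L1 \<sigma>)) (real n * dt)\<bar>
              \<le> (area \<sigma> * (M * M * c) * \<bar>e (L1 \<sigma>) n - e (K1 \<sigma>) n\<bar>) * (2 * H * G)"
            using B[OF n s] C[OF tf s tn] unfolding G_def by (intro mult_mono) auto
        qed
        also have "\<dots> = Kc * BVn n" unfolding Kc_def BVn_def by (simp add: sum_distrib_left algebra_simps)
        finally show "dt * (\<Sum>\<sigma>\<in>int_faces Mesh. g n (K1 \<sigma>) \<sigma> * (\<psi> (center (K1 \<sigma>)) (real n * dt) - \<psi> (center (L1 \<sigma>)) (real n * dt)))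
            \<le> dt * (Kc * BVn n)" using dt by (intro mult_left_mono) auto
      qed
      also have "\<dots> = Kc * (\<Sum>n\<in>{1..N}. dt * BVn n)" by (simp add: sum_distrib_left algebra_simps)
      also have "\<dots> \<le> Kc * (\<Sum>n\<in>{0..N}. dt * BVn n)"
        using Kc0 dt BVn0 by (intro mult_left_mono sum_mono2) auto
      also have "\<dots> = 2 * (M\<^sup>2 * c * norm_xBV Mesh area dt N e * H * G)"
        unfolding BV Kc_def by (simp add: power2_eq_square algebra_simps)
      also have "\<dots> \<le> 3 * (M\<^sup>2 * c * norm_xBV Mesh area dt N e * H * G)"
      proof -
        have "norm_xBV Mesh area dt N e \<ge> 0" unfolding BV using dt BVn0 by (intro sum_nonneg) auto
        then have "M\<^sup>2 * c * norm_xBV Mesh area dt N e * H * G \<ge> 0" using c0 H0 G0 by simp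
        then show ?thesis by linarith
      qed
      finally show ?thesis by (simp add: algebra_simps)
    qed
    have "Sn / G \<le> 3 * M\<^sup>2 * c * norm_xBV Mesh area dt N e * H"
      using Sle G0 by (simp add: pos_divide_le_eq)
    then show "ereal ((\<Sum>n\<in>{1..N}. dt * (\<Sum>K\<in>Mesh. vol K * dR Mesh area \<gamma> e ef rhof u K n * \<psi> (center K) (real n * dt)))
               / grad_sup \<Omega> T \<psi>) \<le> ereal (3 * M\<^sup>2 * c * norm_xBV Mesh area dt N e * mesh_size Mesh)"
      unfolding Sn_def G_def H_def by simp
  qed
qed

end
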